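(* Let $k$ be a finite extension of $\mathbb{Q}_p$ and $L$ a finite-dimensional solvable Lie algebra over $k$ which is CA. Then $L$ is either abelian, or metabelian of the form $C\ltimes N$, where $N$ and $C$ are abelian, $\dim C\leq\dim N$, and $C$ acts fixed-point-freely on $N$.
   Context: A Lie algebra is CA if the centralizer of each of its nonzero elements is abelian. $C$ acts fixed-point-freely on $N$ if for $c\in C$, $n\in N$, $[c,n]=0$ implies $c=0$ or $n=0$. *)

theory Defs
  imports Complex_Main "HOL-Computational_Algebra.Primes"
begin

text \<open>Z_p as the inverse limit of Z/p^n Z: compatible sequences of residues.\<close>
definition padic_ints :: "int \<Rightarrow> (nat \<Rightarrow> int) set" where
  "padic_ints p = {f. \<forall>n. 0 \<le> f n \<and> f n < p ^ n \<and> f (Suc n) mod p ^ n = f n}"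

definition padic_add :: "int \<Rightarrow> (nat \<Rightarrow> int) \<Rightarrow> (nat \<Rightarrow> int) \<Rightarrow> (nat \<Rightarrow> int)" where
  "padic_add p f g = (\<lambda>n. (f n + g n) mod p ^ n)"

definition padic_mult :: "int \<Rightarrow> (nat \<Rightarrow> int) \<Rightarrow> (nat \<Rightarrow> int) \<Rightarrow> (nat \<Rightarrow> int)" where
  "padic_mult p f g = (\<lambda>n. (f n * g n) mod p ^ n)"

definition padic_one :: "int \<Rightarrow> (nat \<Rightarrow> int)" where
  "padic_one p = (\<lambda>n. 1 mod p ^ n)"

text \<open>The field k is a finite extension of Q_p: there is an injective ring homomorphism
  Z_p \<rightarrow> k (which extends uniquely to Q_p = Z_p[1/p]), and k is spanned, as a vector space
  over the image of Q_p (elements phi(a)/p^n), by a finite set.\<close>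
definition finite_ext_Qp :: "int \<Rightarrow> 'k::field itself \<Rightarrow> bool" where
  "finite_ext_Qp p (_::'k itself) \<longleftrightarrow> prime p \<and>
     (\<exists>\<phi> :: (nat \<Rightarrow> int) \<Rightarrow> 'k.
        inj_on \<phi> (padic_ints p) \<and>
        (\<forall>f\<in>padic_ints p. \<forall>g\<in>padic_ints p.
            \<phi> (padic_add p f g) = \<phi> f + \<phi> g \<and> \<phi> (padic_mult p f g) = \<phi> f * \<phi> g) \<and>
        \<phi> (padic_one p) = 1 \<and>
        (\<exists>B :: 'k set. finite B \<and>
           (\<forall>x. \<exists>c. (\<forall>b\<in>B. \<exists>a\<in>padic_ints p. \<exists>m::nat. c b = \<phi> a / of_int p ^ m)
                    \<and> x = (\<Sum>b\<in>B. c b * b))))"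

definition lie_algebra :: "('k::field \<Rightarrow> 'l::ab_group_add \<Rightarrow> 'l) \<Rightarrow> ('l \<Rightarrow> 'l \<Rightarrow> 'l) \<Rightarrow> bool" where
  "lie_algebra scale br \<longleftrightarrow> vector_space scale \<and>
     (\<forall>x y z. br (x + y) z = br x z + br y z) \<and>
     (\<forall>x y z. br x (y + z) = br x y + br x z) \<and>
     (\<forall>a x y. br (scale a x) y = scale a (br x y)) \<and>
     (\<forall>a x y. br x (scale a y) = scale a (br x y)) \<and>
     (\<forall>x. br x x = 0) \<and>
     (\<forall>x y z. br x (br y z) + br y (br z x) + br z (br x y) = 0)"

definition lie_fin_dim :: "('k::field \<Rightarrow> 'l::ab_group_add \<Rightarrow> 'l) \<Rightarrow> bool" where
  "lie_fin_dim scale \<longleftrightarrow> (\<exists>B. finite B \<and> module.span scale B = UNIV)"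

definition abelian_set :: "('l \<Rightarrow> 'l \<Rightarrow> 'l::zero) \<Rightarrow> 'l set \<Rightarrow> bool" where
  "abelian_set br S \<longleftrightarrow> (\<forall>x\<in>S. \<forall>y\<in>S. br x y = 0)"

definition lie_abelian :: "('l \<Rightarrow> 'l \<Rightarrow> 'l::zero) \<Rightarrow> bool" where
  "lie_abelian br \<longleftrightarrow> abelian_set br UNIV"

definition centralizer :: "('l \<Rightarrow> 'l \<Rightarrow> 'l::zero) \<Rightarrow> 'l \<Rightarrow> 'l set" where
  "centralizer br x = {y. br x y = 0}"

definition lie_CA :: "('l \<Rightarrow> 'l \<Rightarrow> 'l::zero) \<Rightarrow> bool" where
  "lie_CA br \<longleftrightarrow> (\<forall>x. x \<noteq> 0 \<longrightarrow> abelian_set br (centralizer br x))"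

fun derived :: "('k::field \<Rightarrow> 'l::ab_group_add \<Rightarrow> 'l) \<Rightarrow> ('l \<Rightarrow> 'l \<Rightarrow> 'l) \<Rightarrow> nat \<Rightarrow> 'l set" where
  "derived scale br 0 = UNIV"
| "derived scale br (Suc n) =
     module.span scale {br x y | x y. x \<in> derived scale br n \<and> y \<in> derived scale br n}"

definition lie_solvable :: "('k::field \<Rightarrow> 'l::ab_group_add \<Rightarrow> 'l) \<Rightarrow> ('l \<Rightarrow> 'l \<Rightarrow> 'l) \<Rightarrow> bool" where
  "lie_solvable scale br \<longleftrightarrow> (\<exists>n. derived scale br n = {0})"

definition lie_metabelian :: "('k::field \<Rightarrow> 'l::ab_group_add \<Rightarrow> 'l) \<Rightarrow> ('l \<Rightarrow> 'l \<Rightarrow> 'l) \<Rightarrow> bool" where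
  "lie_metabelian scale br \<longleftrightarrow> abelian_set br (derived scale br 1)"

definition subalgebra :: "('k::field \<Rightarrow> 'l::ab_group_add \<Rightarrow> 'l) \<Rightarrow> ('l \<Rightarrow> 'l \<Rightarrow> 'l) \<Rightarrow> 'l set \<Rightarrow> bool" where
  "subalgebra scale br S \<longleftrightarrow> module.subspace scale S \<and> (\<forall>x\<in>S. \<forall>y\<in>S. br x y \<in> S)"

definition lie_ideal :: "('k::field \<Rightarrow> 'l::ab_group_add \<Rightarrow> 'l) \<Rightarrow> ('l \<Rightarrow> 'l \<Rightarrow> 'l) \<Rightarrow> 'l set \<Rightarrow> bool" where
  "lie_ideal scale br N \<longleftrightarrow> module.subspace scale N \<and> (\<forall>x. \<forall>y\<in>N. br x y \<in> N)"

definition semidirect_decomp :: "('k::field \<Rightarrow> 'l::ab_group_add \<Rightarrow> 'l) \<Rightarrow> ('l \<Rightarrow> 'l \<Rightarrow> 'l) \<Rightarrow> 'l set \<Rightarrow> 'l set \<Rightarrow> bool" where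
  "semidirect_decomp scale br C N \<longleftrightarrow> subalgebra scale br C \<and> lie_ideal scale br N \<and>
     C \<inter> N = {0} \<and> (\<forall>x. \<exists>c\<in>C. \<exists>n\<in>N. x = c + n)"

definition fixed_point_free :: "('l \<Rightarrow> 'l \<Rightarrow> 'l::zero) \<Rightarrow> 'l set \<Rightarrow> 'l set \<Rightarrow> bool" where
  "fixed_point_free br C N \<longleftrightarrow> (\<forall>c\<in>C. \<forall>n\<in>N. br c n = 0 \<longrightarrow> c = 0 \<or> n = 0)"

end

theory Submission imports Defs "HOL-Computational_Algebra.Polynomial" begin

locale LA = vector_space scale for scale :: "'k::field \<Rightarrow> 'l::ab_group_add \<Rightarrow> 'l" (infixr "*s" 75) +
  fixes br :: "'l \<Rightarrow> 'l \<Rightarrow> 'l" and Bas :: "'l set"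
  assumes add_l: "br (x + y) z = br x z + br y z"
  and add_r: "br x (y + z) = br x y + br x z"
  and scl: "br (a *s x) y = a *s br x y"
  and scr: "br x (a *s y) = a *s br x y"
  and alt: "br x x = 0"
  and jac: "br x (br y z) + br y (br z x) + br z (br x y) = 0"
  and finB: "finite Bas" and indB: "independent Bas" and spanB: "span Bas = UNIV"
  and char0: "0 < n \<Longrightarrow> (of_nat n :: 'k) \<noteq> 0"
  and CA: "x \<noteq> 0 \<Longrightarrow> br x y = 0 \<Longrightarrow> br x z = 0 \<Longrightarrow> br y z = 0"

sublocale LA \<subseteq> fd: finite_dimensional_vector_space scale Bas
  by unfold_locales (rule finB indB spanB)+

sublocale LA \<subseteq> vp: vector_space_pair scale scale ..

context LA begin

lemma br0l[simp]: "br 0 y = 0" using add_l[of 0 0 y] by simp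
lemma br0r[simp]: "br x 0 = 0" using add_r[of x 0 0] by simp
lemma antisym: "br x y = - br y x"
proof -
  have "0 = br (x+y) (x+y)" by (simp add: alt)
  also have "\<dots> = br x x + br x y + (br y x + br y y)" by (simp add: add_l add_r)
  finally have "br x y + br y x = 0" by (simp add: alt)
  then show ?thesis by (simp add: eq_neg_iff_add_eq_0)
qed
lemma negl: "br (-x) y = - br x y"
proof -
  have "br (-x) y + br x y = 0" using add_l[of "-x" x y] by simp
  then show ?thesis by (simp add: eq_neg_iff_add_eq_0)
qed
lemma negr: "br x (-y) = - br x y"
proof -
  have "br x (-y) + br x y = 0" using add_r[of x "-y" y] by simp
  then show ?thesis by (simp add: eq_neg_iff_add_eq_0)
qed
lemma diffl: "br (x - y) z = br x z - br y z"
  using add_l[of x "-y" z] by (simp add: negl)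
lemma diffr: "br x (y - z) = br x y - br x z"
  using add_r[of x y "-z"] by (simp add: negr)
lemma jac2: "br x (br y z) = br (br x y) z + br y (br x z)"
proof -
  have "br x (br y z) + br y (br z x) + br z (br x y) = 0" by (rule jac)
  moreover have "br y (br z x) = - br y (br x z)" using antisym[of z x] by (simp add: negr)
  moreover have "br z (br x y) = - br (br x y) z" by (rule antisym)
  ultimately have "br x (br y z) - br y (br x z) - br (br x y) z = 0" by simp
  then show ?thesis by (simp add: algebra_simps)
qed
lemma lin_r: "Vector_Spaces.linear scale scale (br x)"
  unfolding Vector_Spaces.linear_iff using vector_space_axioms by (simp add: add_r scr)
lemma lin_l: "Vector_Spaces.linear scale scale (\<lambda>x. br x y)"
  unfolding Vector_Spaces.linear_iff using vector_space_axioms by (simp add: add_l scl)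

lemma cent_subspace: "subspace {y. br x y = 0}"
  by (auto simp: subspace_def add_r scr)


definition pev :: "('l \<Rightarrow> 'l) \<Rightarrow> 'k poly \<Rightarrow> 'l \<Rightarrow> 'l" where
  "pev R q x = (\<Sum>i\<le>degree q. coeff q i *s (R^^i) x)"

lemma pev_bound: "degree q < n \<Longrightarrow> pev R q x = (\<Sum>i<n. coeff q i *s (R^^i) x)"
  unfolding pev_def
  by (rule sum.mono_neutral_left) (auto simp: coeff_eq_0)

lemma pev_zero[simp]: "pev R 0 x = 0"
  by (simp add: pev_def)

lemma pev_add: "pev R (p + q) x = pev R p x + pev R q x"
proof -
  define n where "n = Suc (max (degree p) (degree q))"
  have "degree (p + q) < n" using degree_add_le_max[of p q] by (simp add: n_def)
  moreover have "degree p < n" "degree q < n" by (auto simp: n_def)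
  ultimately show ?thesis
    by (simp add: pev_bound[of _ n] scale_left_distrib sum.distrib)
qed

lemma pev_smult: "pev R (smult a q) x = a *s pev R q x"
proof -
  have "degree (smult a q) < Suc (degree q)" using degree_smult_le[of a q] by simp
  then show ?thesis
    by (simp add: pev_bound[of _ "Suc (degree q)"] scale_sum_right del: sum.lessThan_Suc)
qed

lemma pev_pCons:
  assumes lR: "Vector_Spaces.linear scale scale R"
  shows "pev R (pCons a p) x = a *s x + R (pev R p x)"
proof -
  define n where "n = Suc (degree p)"
  have d1: "degree (pCons a p) < Suc n" using degree_pCons_le[of a p] by (simp add: n_def)
  have d2: "degree p < n" by (simp add: n_def)
  have "pev R (pCons a p) x = (\<Sum>i<Suc n. coeff (pCons a p) i *s (R^^i) x)"
    by (rule pev_bound[OF d1])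
  also have "\<dots> = a *s x + (\<Sum>i<n. coeff p i *s R ((R^^i) x))"
    by (simp only: sum.lessThan_Suc_shift) (simp del: sum.lessThan_Suc)
  also have "(\<Sum>i<n. coeff p i *s R ((R^^i) x)) = R (\<Sum>i<n. coeff p i *s (R^^i) x)"
    by (simp add: vp.linear_sum[OF lR] vp.linear_scale[OF lR])
  also have "\<dots> = R (pev R p x)" by (simp add: pev_bound[OF d2])
  finally show ?thesis .
qed

lemma pev_mult:
  assumes lR: "Vector_Spaces.linear scale scale R"
  shows "pev R (p * q) x = pev R p (pev R q x)"
proof (induct p)
  case 0
  then show ?case by simp
next
  case (pCons a p)
  then show ?case
    by (simp add: pev_add pev_smult pev_pCons[OF lR] vp.linear_0[OF lR])
qed

lemma pev_const:
  assumes lR: "Vector_Spaces.linear scale scale R"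
  shows "pev R [:a:] x = a *s x"
  using pev_pCons[OF lR, of a 0 x] by (simp add: vp.linear_0[OF lR])

lemma pev_monom:
  assumes lR: "Vector_Spaces.linear scale scale R"
  shows "pev R (monom a i) x = a *s (R^^i) x"
  by (induct i) (simp_all add: monom_0 monom_Suc pev_const[OF lR] pev_pCons[OF lR] vp.linear_scale[OF lR] vp.linear_0[OF lR])

lemma pev_lin_add:
  assumes lR: "Vector_Spaces.linear scale scale R"
  shows "pev R q (x + y) = pev R q x + pev R q y"
proof (induct q)
  case 0
  then show ?case by simp
next
  case (pCons a p)
  then show ?case
    by (simp add: pev_pCons[OF lR] vp.linear_add[OF lR] scale_right_distrib algebra_simps)
qed

lemma pev_lin_scale:
  assumes lR: "Vector_Spaces.linear scale scale R"
  shows "pev R q (c *s x) = c *s pev R q x"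
proof (induct q)
  case 0
  then show ?case by simp
next
  case (pCons a p)
  then show ?case
    by (simp add: pev_pCons[OF lR] vp.linear_scale[OF lR] scale_right_distrib mult.commute)
qed

lemma pev_linear:
  assumes lR: "Vector_Spaces.linear scale scale R"
  shows "Vector_Spaces.linear scale scale (pev R q)"
  unfolding Vector_Spaces.linear_iff using vector_space_axioms
  by (simp add: pev_lin_add[OF lR] pev_lin_scale[OF lR])

lemma pev_in:
  assumes lR: "Vector_Spaces.linear scale scale R" and N: "subspace N" and RN: "R ` N \<subseteq> N"
    and x: "x \<in> N"
  shows "pev R q x \<in> N"
proof (induct q)
  case 0
  then show ?case using N by (simp add: subspace_0)
next
  case (pCons a p)
  then have "R (pev R p x) \<in> N" using RN by auto
  then show ?case
    by (simp add: pev_pCons[OF lR] subspace_add[OF N] subspace_scale[OF N] x)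
qed

lemma pev_deriv:
  assumes lR: "Vector_Spaces.linear scale scale R" and lP: "Vector_Spaces.linear scale scale P"
    and N: "subspace N" and RN: "R ` N \<subseteq> N" and PN: "P ` N \<subseteq> N"
    and comm: "\<And>n. n \<in> N \<Longrightarrow> P (R n) - R (P n) = n"
    and x: "x \<in> N"
  shows "P (pev R q x) - pev R q (P x) = pev R (pderiv q) x"
proof (induct q)
  case 0
  then show ?case by (simp add: vp.linear_0[OF lP])
next
  case (pCons a p)
  define y where "y = pev R p x"
  have yN: "y \<in> N" unfolding y_def by (rule pev_in[OF lR N RN x])
  have "P (pev R (pCons a p) x) - pev R (pCons a p) (P x)
      = (a *s P x + P (R y)) - (a *s P x + R (pev R p (P x)))"
    by (simp add: pev_pCons[OF lR] y_def vp.linear_add[OF lP] vp.linear_scale[OF lP])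
  also have "P (R y) = y + R (P y)" using comm[OF yN] by (simp add: algebra_simps)
  also have "(a *s P x + (y + R (P y))) - (a *s P x + R (pev R p (P x)))
      = y + R (P y - pev R p (P x))"
    by (simp add: vp.linear_diff[OF lR] algebra_simps)
  also have "P y - pev R p (P x) = pev R (pderiv p) x" using pCons by (simp add: y_def)
  also have "y + R (pev R (pderiv p) x) = pev R (pderiv (pCons a p)) x"
    by (simp add: pderiv_pCons pev_add pev_pCons[OF lR] y_def)
  finally show ?case .
qed


lemma ann_single:
  assumes lR: "Vector_Spaces.linear scale scale R"
  shows "\<exists>q. q \<noteq> 0 \<and> pev R q y = 0"
proof (rule ccontr)
  assume H: "\<not> ?thesis"
  then have H': "\<And>q. q \<noteq> 0 \<Longrightarrow> pev R q y \<noteq> 0" by blast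
  define m where "m = card Bas"
  define f where "f i = (R^^i) y" for i
  have inj: "inj_on f {..m}"
  proof (rule inj_onI)
    fix i j assume "i \<in> {..m}" "j \<in> {..m}" and fij: "f i = f j"
    show "i = j"
    proof (rule ccontr)
      assume ij: "i \<noteq> j"
      let ?q = "monom (1::'k) i + monom (-1) j"
      have "coeff ?q i = 1" using ij by simp
      then have "?q \<noteq> 0"
      proof (intro notI)
        assume h: "?q = 0"
        have "coeff ?q i = coeff 0 i" by (simp only: h)
        then show False using \<open>coeff ?q i = 1\<close> by simp
      qed
      moreover have "pev R ?q y = 0" using fij by (simp add: pev_add pev_monom[OF lR] f_def)
      ultimately show False using H' by blast
    qed
  qed
  have indep: "independent (f ` {..m})"
  proof (rule independent_if_scalars_zero)
    show "finite (f ` {..m})" by simp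
    fix g v assume sum0: "(\<Sum>x\<in>f ` {..m}. g x *s x) = 0" and v: "v \<in> f ` {..m}"
    define q where "q = (\<Sum>i\<le>m. monom (g (f i)) i)"
    have cq: "coeff q j = (if j \<le> m then g (f j) else 0)" for j
      by (simp add: q_def coeff_sum)
    have dq: "degree q < Suc m" using degree_le[of m q] cq by auto
    have "pev R q y = (\<Sum>i<Suc m. coeff q i *s f i)" using pev_bound[OF dq] f_def by simp
    also have "\<dots> = (\<Sum>i\<le>m. g (f i) *s f i)"
      by (simp add: cq lessThan_Suc_atMost del: sum.lessThan_Suc)
    also have "\<dots> = (\<Sum>x\<in>f ` {..m}. g x *s x)" by (simp add: sum.reindex[OF inj])
    also have "\<dots> = 0" by (rule sum0)
    finally have q0: "q = 0" using H' by blast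
    obtain i where "i \<le> m" "v = f i" using v by auto
    then show "g v = 0" using cq[of i] q0 by simp
  qed
  have "card (f ` {..m}) = Suc m" using card_image[OF inj] by simp
  moreover have "card (f ` {..m}) \<le> card Bas" using independent_span_bound[OF finB indep] spanB by auto
  ultimately show False by (simp add: m_def)
qed

lemma ann_finite:
  assumes lR: "Vector_Spaces.linear scale scale R" and S: "finite S"
  shows "\<exists>q. q \<noteq> 0 \<and> (\<forall>s\<in>S. pev R q s = 0)"
  using S
proof (induct S rule: finite_induct)
  case empty
  then show ?case by (intro exI[of _ 1]) simp
next
  case (insert s S)
  then obtain q where q: "q \<noteq> 0" "\<forall>t\<in>S. pev R q t = 0" by blast
  obtain r where r: "r \<noteq> 0" "pev R r (pev R q s) = 0" using ann_single[OF lR] by blast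
  have "r * q \<noteq> 0" using q r by simp
  moreover have "\<forall>t\<in>insert s S. pev R (r * q) t = 0"
    using q r by (auto simp: pev_mult[OF lR] vp.linear_0[OF pev_linear[OF lR]])
  ultimately show ?case by blast
qed

lemma ann_all:
  assumes lR: "Vector_Spaces.linear scale scale R"
  shows "\<exists>q. q \<noteq> 0 \<and> (\<forall>x. pev R q x = 0)"
proof -
  obtain q where q: "q \<noteq> 0" "\<forall>s\<in>Bas. pev R q s = 0" using ann_finite[OF lR finB] by blast
  have "pev R q x = 0" for x
    using vp.linear_eq_0_on_span[OF pev_linear[OF lR], of Bas q x] q spanB by auto
  then show ?thesis using q by blast
qed

lemma weyl:
  assumes lR: "Vector_Spaces.linear scale scale R" and lP: "Vector_Spaces.linear scale scale P"
    and N: "subspace N" and RN: "R ` N \<subseteq> N" and PN: "P ` N \<subseteq> N"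
    and comm: "\<And>n. n \<in> N \<Longrightarrow> P (R n) - R (P n) = n"
    and v0: "v0 \<in> N" "v0 \<noteq> 0"
  shows False
proof -
  have key: "\<forall>q. degree q = d \<longrightarrow> q \<noteq> 0 \<longrightarrow> (\<forall>x\<in>N. pev R q x = 0) \<longrightarrow> False" for d
  proof (induct d rule: less_induct)
    case (less d)
    show ?case
    proof (intro allI impI)
      fix q :: "'k poly" assume dq: "degree q = d" and q0: "q \<noteq> 0" and z: "\<forall>x\<in>N. pev R q x = 0"
      show False
      proof (cases d)
        case 0
        then have "degree q = 0" using dq by simp
        then obtain a where qa: "q = [:a:]" using degree0_coeffs by blast
        then have "pev R q v0 = a *s v0" using pev_const[OF lR, of a v0] by simp
        moreover have "a \<noteq> 0" using q0 qa by auto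
        ultimately show False using z v0 by simp
      next
        case (Suc e)
        have c: "coeff (pderiv q) e = of_nat d * coeff q d" unfolding Suc by (rule coeff_pderiv)
        have "coeff q d \<noteq> 0" using leading_coeff_neq_0[OF q0] dq by simp
        moreover have "(of_nat d :: 'k) \<noteq> 0" using char0[of d] Suc by blast
        ultimately have pq: "pderiv q \<noteq> 0" using c by (metis coeff_0 no_zero_divisors)
        have "degree (pderiv q) \<le> e"
        proof (rule degree_le, intro allI impI)
          fix i assume "e < i"
          then have "degree q < Suc i" using dq Suc by simp
          then have "coeff q (Suc i) = 0" by (rule coeff_eq_0)
          then show "coeff (pderiv q) i = 0" by (simp add: coeff_pderiv)
        qed
        then have dl: "degree (pderiv q) < d" using Suc by simp
        have "\<forall>x\<in>N. pev R (pderiv q) x = 0"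
        proof
          fix x assume x: "x \<in> N"
          have "P x \<in> N" using PN x by auto
          then have "P (pev R q x) - pev R q (P x) = 0" using z x by (simp add: vp.linear_0[OF lP])
          then show "pev R (pderiv q) x = 0"
            using pev_deriv[OF lR lP N RN PN comm x, of q] by simp
        qed
        then show False using less[OF dl] pq by blast
      qed
    qed
  qed
  obtain q where "q \<noteq> 0" "\<forall>x. pev R q x = 0" using ann_all[OF lR] by blast
  then show False using key[of "degree q"] by blast
qed


lemma surj_on:
  assumes lf: "Vector_Spaces.linear scale scale f" and N: "subspace N"
    and fN: "f ` N \<subseteq> N" and inj: "inj_on f N"
  shows "N \<subseteq> f ` N"
proof -
  obtain Bn where Bn: "Bn \<subseteq> N" "independent Bn" "N \<subseteq> span Bn" "card Bn = dim N"
    using basis_exists[of N] by blast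
  have sB: "span Bn \<subseteq> N" using span_minimal[OF Bn(1) N] .
  have injB: "inj_on f (span Bn)" using inj_on_subset[OF inj sB] .
  have ind: "independent (f ` Bn)" using vp.linear_independent_injective_image[OF lf Bn(2) injB] .
  have card: "card (f ` Bn) = dim N"
    using card_image[OF inj_on_subset[OF injB span_superset]] Bn(4) by simp
  have "N \<subseteq> span (f ` Bn)"
    using fd.card_ge_dim_independent[of "f ` Bn" N] ind card Bn(1) fN by auto
  also have "span (f ` Bn) = f ` span Bn" using vp.linear_span_image[OF lf] .
  also have "\<dots> \<subseteq> f ` N" using sB by auto
  finally show ?thesis .
qed

lemma derived_sub: "subspace (derived scale br n)"
  by (cases n) simp_all

lemma derived_gen: "a \<in> derived scale br n \<Longrightarrow> b \<in> derived scale br n \<Longrightarrow> br a b \<in> derived scale br (Suc n)"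
  by (auto intro!: span_base)

lemma derived_ideal: "z \<in> derived scale br n \<Longrightarrow> br x z \<in> derived scale br n"
proof (induct n arbitrary: x z)
  case 0
  then show ?case by simp
next
  case (Suc n)
  let ?G = "{br x y | x y. x \<in> derived scale br n \<and> y \<in> derived scale br n}"
  from Suc.prems have "z \<in> span ?G" by simp
  then have "br x z \<in> span ?G"
  proof (induct rule: span_induct_alt)
    case base
    then show ?case by (simp add: span_zero)
  next
    case (step c a y)
    then obtain a1 a2 where a: "a = br a1 a2" "a1 \<in> derived scale br n" "a2 \<in> derived scale br n" by blast
    have "br x a = br (br x a1) a2 + br a1 (br x a2)" unfolding a(1) by (rule jac2)
    moreover have "br (br x a1) a2 \<in> ?G" using Suc.hyps a by blast
    moreover have "br a1 (br x a2) \<in> ?G" using Suc.hyps a by blast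
    ultimately have "br x a \<in> span ?G" by (simp add: span_add span_base)
    then show ?case using step(2) by (simp add: add_r scr span_add span_scale)
  qed
  then show ?case by simp
qed

end

locale LAN = LA scale br Bas
  for scale :: "'k::field \<Rightarrow> 'l::ab_group_add \<Rightarrow> 'l" (infixr "*s" 75) and br Bas +
  fixes N :: "'l set" and v0 :: 'l
  assumes Nsub: "subspace N" and Nid: "n \<in> N \<Longrightarrow> br x n \<in> N"
    and Nab: "m \<in> N \<Longrightarrow> n \<in> N \<Longrightarrow> br m n = 0"
    and Ncent: "n \<in> N \<Longrightarrow> n \<noteq> 0 \<Longrightarrow> br n y = 0 \<Longrightarrow> y \<in> N"
    and v0N: "v0 \<in> N" and v0nz: "v0 \<noteq> 0"
begin

lemma inj_ad: assumes x: "x \<notin> N" shows "inj_on (br x) N"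
proof (rule inj_onI)
  fix a b assume a: "a \<in> N" and b: "b \<in> N" and e: "br x a = br x b"
  show "a = b"
  proof (rule ccontr)
    assume "a \<noteq> b"
    then have nz: "a - b \<noteq> 0" by simp
    have ab: "a - b \<in> N" using subspace_diff[OF Nsub a b] .
    have "br x (a - b) = 0" using e by (simp add: diffr)
    then have "br (a - b) x = 0" using antisym[of "a - b" x] by simp
    then have "x \<in> N" using Ncent[OF ab nz] by blast
    then show False using x by simp
  qed
qed

lemma ad_N: "br x ` N \<subseteq> N" using Nid by auto

lemma surj_ad: "x \<notin> N \<Longrightarrow> N \<subseteq> br x ` N"
  using surj_on[OF lin_r Nsub ad_N inj_ad] by blast

lemma J: assumes h: "br u (br u w) \<in> N" shows "br u w \<in> N"
proof (rule ccontr)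
  define c where "c = br u w"
  assume "br u w \<notin> N"
  then have cN: "c \<notin> N" by (simp add: c_def)
  have injC: "inj_on (br c) N" by (rule inj_ad[OF cN])
  have surjC: "N \<subseteq> br c ` N" by (rule surj_ad[OF cN])
  have spN: "span N = N" using Nsub by simp
  obtain g where g: "Vector_Spaces.linear scale scale g" "\<forall>x\<in>N. g (br c x) = x"
    using vp.linear_inj_on_left_inverse[OF lin_r, of c N] injC spN by auto
  have gN: "g y \<in> N \<and> br c (g y) = y" if y: "y \<in> N" for y
  proof -
    obtain x where "x \<in> N" "y = br c x" using surjC y by blast
    then show ?thesis using g(2) by simp
  qed
  define R where "R = g \<circ> br w"
  have lR: "Vector_Spaces.linear scale scale R"
    unfolding R_def by (rule Vector_Spaces.linear_compose[OF lin_r g(1)])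
  have RN: "R ` N \<subseteq> N" using gN Nid by (auto simp: R_def)
  have cc: "br c (br u z) = br u (br c z)" if z: "z \<in> N" for z
  proof -
    have "br u (br c z) = br (br u c) z + br c (br u z)" by (rule jac2)
    moreover have "br (br u c) z = 0" using Nab[OF _ z] h by (simp add: c_def)
    ultimately show ?thesis by simp
  qed
  have comm: "br u (R n) - R (br u n) = n" if n: "n \<in> N" for n
  proof -
    define m where "m = br w n"
    have mN: "m \<in> N" using Nid n by (simp add: m_def)
    have gm: "g m \<in> N" "br c (g m) = m" using gN[OF mN] by auto
    have wun: "br w (br u n) \<in> N" using Nid n by simp
    have g2: "g (br w (br u n)) \<in> N" "br c (g (br w (br u n))) = br w (br u n)" using gN[OF wun] by auto
    have L: "br u (R n) - R (br u n) = br u (g m) - g (br w (br u n))" by (simp add: R_def m_def)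
    have LN: "br u (g m) - g (br w (br u n)) \<in> N"
      using subspace_diff[OF Nsub Nid[OF gm(1)] g2(1)] .
    have "br c (br u (g m) - g (br w (br u n))) = br u (br c (g m)) - br w (br u n)"
      by (simp add: diffr cc[OF gm(1)] g2(2))
    also have "\<dots> = br u (br w n) - br w (br u n)" by (simp only: gm(2)) (simp add: m_def)
    also have "\<dots> = br c n" using jac2[of u w n] by (simp add: c_def)
    finally have "br c (br u (g m) - g (br w (br u n))) = br c n" .
    then have "br u (g m) - g (br w (br u n)) = n" using injC LN n by (auto dest: inj_onD)
    then show ?thesis using L by simp
  qed
  show False using weyl[OF lR lin_r Nsub RN ad_N comm v0N v0nz] .
qed

lemma step: assumes h: "derived scale br (Suc (Suc j)) \<subseteq> N" shows "derived scale br (Suc j) \<subseteq> N"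
proof -
  have s1: "br b x \<in> N" if b: "b \<in> derived scale br (Suc j)" for b x
  proof -
    have "br x b \<in> derived scale br (Suc j)" by (rule derived_ideal[OF b])
    then have bx: "br b x \<in> derived scale br (Suc j)"
      using subspace_neg[OF derived_sub] antisym[of b x] by metis
    have "br b (br b x) \<in> N" using h derived_gen[OF b bx] by blast
    then show ?thesis by (rule J)
  qed
  have "span {br x y | x y. x \<in> derived scale br j \<and> y \<in> derived scale br j} \<subseteq> N"
  proof (rule span_minimal[OF _ Nsub], clarify)
    fix u v assume u: "u \<in> derived scale br j" and v: "v \<in> derived scale br j"
    have b: "br u v \<in> derived scale br (Suc j)" by (rule derived_gen[OF u v])
    have "br (br u v) u \<in> N" by (rule s1[OF b])
    then have "br u (br u v) \<in> N" using subspace_neg[OF Nsub] antisym[of u "br u v"] by metis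
    then show "br u v \<in> N" by (rule J)
  qed
  then show ?thesis by simp
qed

lemma D1: assumes m: "derived scale br m = {0}" shows "derived scale br 1 \<subseteq> N"
proof -
  have m0: "m \<noteq> 0"
  proof
    assume "m = 0"
    then have "(UNIV :: 'l set) = {0}" using m by simp
    then show False using v0nz by (metis UNIV_I singletonD)
  qed
  have "d < m \<Longrightarrow> derived scale br (m - d) \<subseteq> N" for d
  proof (induct d)
    case 0
    then show ?case using m subspace_0[OF Nsub] by simp
  next
    case (Suc d)
    then have "0 < m - Suc d" by simp
    then obtain j where j: "m - Suc d = Suc j" using gr0_implies_Suc by blast
    have "m - d = Suc (Suc j)" using j Suc.prems by simp
    then have "derived scale br (Suc (Suc j)) \<subseteq> N" using Suc by simp
    then show ?case using step j by simp
  qed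
  from this[of "m - 1"] m0 show ?thesis by simp
qed


lemma final:
  assumes D1: "derived scale br 1 \<subseteq> N" and x0: "x0 \<notin> N"
  shows "semidirect_decomp scale br {y. br x0 y = 0} N \<and> abelian_set br {y. br x0 y = 0}
     \<and> abelian_set br N \<and> dim {y. br x0 y = 0} \<le> dim N \<and> fixed_point_free br {y. br x0 y = 0} N"
proof -
  define C where "C = {y. br x0 y = 0}"
  have x0nz: "x0 \<noteq> 0" using x0 subspace_0[OF Nsub] by auto
  have Csub: "subspace C" unfolding C_def by (rule cent_subspace)
  have Cab: "abelian_set br C" unfolding abelian_set_def C_def using CA[OF x0nz] by blast
  have Nab': "abelian_set br N" unfolding abelian_set_def using Nab by blast
  have CN: "C \<inter> N = {0}"
  proof
    show "C \<inter> N \<subseteq> {0}"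
    proof
      fix y assume y: "y \<in> C \<inter> N"
      show "y \<in> {0}"
      proof (rule ccontr)
        assume "y \<notin> {0}"
        then have ynz: "y \<noteq> 0" by simp
        have "br y x0 = 0" using y antisym[of y x0] by (simp add: C_def)
        then have "x0 \<in> N" using Ncent[of y x0] y ynz by blast
        then show False using x0 by simp
      qed
    qed
    show "{0} \<subseteq> C \<inter> N" using subspace_0[OF Csub] subspace_0[OF Nsub] by simp
  qed
  have dec: "\<exists>c\<in>C. \<exists>n\<in>N. z = c + n" for z
  proof -
    have "br x0 z \<in> derived scale br (Suc 0)" by (rule derived_gen) simp_all
    then have "br x0 z \<in> N" using D1 by auto
    then obtain m where m: "m \<in> N" "br x0 z = br x0 m" using surj_ad[OF x0] by blast
    have "z - m \<in> C" using m by (simp add: C_def diffr)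
    moreover have "z = (z - m) + m" by simp
    ultimately show ?thesis using m(1) by blast
  qed
  have fpf: "fixed_point_free br C N"
    unfolding fixed_point_free_def
  proof (intro ballI impI)
    fix c n assume c: "c \<in> C" and n: "n \<in> N" and e: "br c n = 0"
    show "c = 0 \<or> n = 0"
    proof (cases "n = 0")
      case False
      have "br n c = 0" using e antisym[of n c] by simp
      then have "c \<in> N" using Ncent[OF n False] by blast
      then show ?thesis using CN c by blast
    qed simp
  qed
  have dimle: "dim C \<le> dim N"
  proof -
    define f where "f = (\<lambda>c. br c v0)"
    have lf: "Vector_Spaces.linear scale scale f" unfolding f_def by (rule lin_l)
    have injf: "inj_on f C"
    proof (rule inj_onI)
      fix a b assume a: "a \<in> C" and b: "b \<in> C" and e: "f a = f b"
      have "a - b \<in> C" by (rule subspace_diff[OF Csub a b])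
      moreover have "br (a - b) v0 = 0" using e by (simp add: f_def diffl)
      ultimately have "a - b = 0" using fpf v0N v0nz unfolding fixed_point_free_def by blast
      then show "a = b" by simp
    qed
    have fN: "f ` C \<subseteq> N" using Nid v0N by (auto simp: f_def)
    obtain Bc where Bc: "Bc \<subseteq> C" "independent Bc" "C \<subseteq> span Bc" "card Bc = dim C"
      using basis_exists[of C] by blast
    have sB: "span Bc \<subseteq> C" using span_minimal[OF Bc(1) Csub] .
    have injB: "inj_on f (span Bc)" using inj_on_subset[OF injf sB] .
    have ind: "independent (f ` Bc)" using vp.linear_independent_injective_image[OF lf Bc(2) injB] .
    have "card (f ` Bc) = dim C" using card_image[OF inj_on_subset[OF injB span_superset]] Bc(4) by simp
    moreover have "f ` Bc \<subseteq> N" using fN Bc(1) by blast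
    then have "card (f ` Bc) \<le> dim N" using fd.independent_card_le_dim[of "f ` Bc" N] ind by blast
    ultimately show ?thesis by simp
  qed
  have sa: "subalgebra scale br C"
    unfolding subalgebra_def using Csub Cab subspace_0[OF Csub] unfolding abelian_set_def by simp
  have li: "lie_ideal scale br N" unfolding lie_ideal_def using Nsub Nid by blast
  have "semidirect_decomp scale br C N"
    unfolding semidirect_decomp_def using sa li CN dec by blast
  then show ?thesis using Cab Nab' dimle fpf unfolding C_def by blast
qed

end

context LA begin

lemma main_LA:
  assumes nab: "br x1 y1 \<noteq> 0" and solv: "derived scale br m = {0}"
  shows "lie_metabelian scale br \<and> (\<exists>C N. semidirect_decomp scale br C N \<and>
                 abelian_set br C \<and> abelian_set br N \<and>
                 dim C \<le> dim N \<and> fixed_point_free br C N)"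
proof -
  have x1: "x1 \<noteq> 0" using nab by auto
  have "\<exists>i. derived scale br i \<noteq> {0} \<and> derived scale br (Suc i) = {0}"
  proof (rule ccontr)
    assume H: "\<not> ?thesis"
    have "derived scale br i \<noteq> {0}" for i
    proof (induct i)
      case 0
      show ?case using x1 by auto
    next
      case (Suc i)
      then show ?case using H by blast
    qed
    then show False using solv by blast
  qed
  then obtain i where Di: "derived scale br i \<noteq> {0}" "derived scale br (Suc i) = {0}" by blast
  obtain a0 where a0: "a0 \<in> derived scale br i" "a0 \<noteq> 0"
    using Di(1) subspace_0[OF derived_sub[of i]] by blast
  have Aab: "br a b = 0" if "a \<in> derived scale br i" "b \<in> derived scale br i" for a b
    using derived_gen[OF that] Di(2) by simp
  define N where "N = {y. br a0 y = 0}"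
  have lan: "LAN scale br Bas N a0"
  proof (rule LAN.intro)
    show "LA scale br Bas" by (rule LA_axioms)
    show "LAN_axioms scale br N a0"
    proof
      show "subspace N" unfolding N_def by (rule cent_subspace)
      show "br x n \<in> N" if n: "n \<in> N" for x n
      proof -
        have "br x a0 \<in> derived scale br i" by (rule derived_ideal[OF a0(1)])
        then have t: "br a0 x \<in> derived scale br i"
          using subspace_neg[OF derived_sub] antisym[of a0 x] by metis
        have tN: "br a0 (br a0 x) = 0" by (rule Aab[OF a0(1) t])
        have "br a0 (br x n) = br (br a0 x) n + br x (br a0 n)" by (rule jac2)
        moreover have "br a0 n = 0" using n by (simp add: N_def)
        moreover have "br (br a0 x) n = 0" using CA[OF a0(2) tN] n by (simp add: N_def)
        ultimately show ?thesis by (simp add: N_def)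
      qed
      show "br m n = 0" if "m \<in> N" "n \<in> N" for m n
        using CA[OF a0(2)] that by (simp add: N_def)
      show "y \<in> N" if n: "n \<in> N" "n \<noteq> 0" "br n y = 0" for n y
      proof -
        have "br n a0 = 0" using n(1) antisym[of n a0] by (simp add: N_def)
        then show ?thesis using CA[OF n(2)] n(3) by (simp add: N_def)
      qed
      show "a0 \<in> N" by (simp add: N_def alt)
      show "a0 \<noteq> 0" by (rule a0(2))
    qed
  qed
  interpret LAN scale br Bas N a0 by (rule lan)
  have D1': "derived scale br 1 \<subseteq> N" by (rule D1[OF solv])
  have "\<exists>x0. x0 \<notin> N"
  proof (rule ccontr)
    assume "\<not> ?thesis"
    then have "x1 \<in> N" "y1 \<in> N" by auto
    then show False using Nab nab by blast
  qed
  then obtain x0 where x0: "x0 \<notin> N" by blast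
  have meta: "lie_metabelian scale br"
    unfolding lie_metabelian_def abelian_set_def using D1' Nab by blast
  from final[OF D1' x0] meta show ?thesis by blast
qed

end

lemma char0_Qp:
  assumes "finite_ext_Qp p TYPE('k::field)" "0 < n"
  shows "(of_nat n :: 'k) \<noteq> 0"
proof -
  from assms(1) obtain \<phi> :: "(nat \<Rightarrow> int) \<Rightarrow> 'k" where pr: "prime p"
    and inj: "inj_on \<phi> (padic_ints p)"
    and hom: "\<forall>f\<in>padic_ints p. \<forall>g\<in>padic_ints p.
            \<phi> (padic_add p f g) = \<phi> f + \<phi> g \<and> \<phi> (padic_mult p f g) = \<phi> f * \<phi> g"
    and one: "\<phi> (padic_one p) = 1"
    unfolding finite_ext_Qp_def by blast
  have p1: "p > 1" using pr by (simp add: prime_gt_1_int)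
  define e where "e k = (\<lambda>m. int k mod p ^ m)" for k :: nat
  have eP: "e k \<in> padic_ints p" for k
    unfolding padic_ints_def e_def
  proof (intro CollectI allI conjI)
    fix m
    have pm: "0 < p ^ m" using p1 by simp
    show "0 \<le> int k mod p ^ m" using pm by simp
    show "int k mod p ^ m < p ^ m" using pm by simp
    show "int k mod p ^ Suc m mod p ^ m = int k mod p ^ m"
      by (rule mod_mod_cancel) (simp add: le_imp_power_dvd)
  qed
  have eadd: "padic_add p (e a) (e b) = e (a + b)" for a b
    unfolding padic_add_def e_def by (simp add: mod_add_eq)
  have e1: "padic_one p = e 1" unfolding padic_one_def e_def by simp
  have phie: "\<phi> (e k) = of_nat k" for k
  proof (induct k)
    case 0
    have "\<phi> (e 0) = \<phi> (padic_add p (e 0) (e 0))" by (simp add: eadd)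
    also have "\<dots> = \<phi> (e 0) + \<phi> (e 0)" using hom eP by blast
    finally have "\<phi> (e 0) = 0" by (metis add_cancel_right_right)
    then show ?case by simp
  next
    case (Suc k)
    have "\<phi> (e (Suc k)) = \<phi> (padic_add p (e k) (e 1))" by (simp add: eadd)
    also have "\<dots> = \<phi> (e k) + \<phi> (e 1)" using hom eP by blast
    also have "\<phi> (e 1) = 1" using one e1 by simp
    finally show ?case using Suc by simp
  qed
  have "int n < p ^ n"
  proof -
    have "int n < int (2 ^ n)" using less_exp[of n] by linarith
    also have "\<dots> = 2 ^ n" by simp
    also have "(2::int) ^ n \<le> p ^ n" using p1 by (intro power_mono) auto
    finally show ?thesis .
  qed
  then have en: "e n n = int n" unfolding e_def by simp
  have e0: "e 0 n = 0" unfolding e_def by simp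
  have "e n \<noteq> e 0"
  proof
    assume "e n = e 0"
    then have "e n n = e 0 n" by simp
    then show False using en e0 assms(2) by simp
  qed
  then have "\<phi> (e n) \<noteq> \<phi> (e 0)" using inj eP by (metis inj_onD)
  then show ?thesis using phie by simp
qed

theorem proposition2p3:
  fixes p :: int
    and scale :: "'k::field \<Rightarrow> 'l::ab_group_add \<Rightarrow> 'l"
    and br :: "'l \<Rightarrow> 'l \<Rightarrow> 'l"
  assumes "finite_ext_Qp p TYPE('k)"
    and "lie_algebra scale br"
    and "lie_fin_dim scale"
    and "lie_solvable scale br"
    and "lie_CA br"
  shows "lie_abelian br \<or>
         (lie_metabelian scale br \<and>
          (\<exists>C N. semidirect_decomp scale br C N \<and>
                 abelian_set br C \<and> abelian_set br N \<and>
                 vector_space.dim scale C \<le> vector_space.dim scale N \<and>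
                 fixed_point_free br C N))"
proof -
  have c0: "\<And>n. 0 < n \<Longrightarrow> (of_nat n :: 'k) \<noteq> 0" using char0_Qp[OF assms(1)] by blast
  have vs: "vector_space scale" using assms(2) unfolding lie_algebra_def by blast
  obtain B where B: "finite B" "module.span scale B = UNIV"
    using assms(3) unfolding lie_fin_dim_def by blast
  obtain Bas where Bas: "\<not> module.dependent scale Bas" "UNIV \<subseteq> module.span scale Bas"
    using vector_space.basis_exists[OF vs, of UNIV] by blast
  have fin: "finite Bas"
    using vector_space.independent_span_bound[OF vs B(1) Bas(1)] B(2) by blast
  have la: "LA scale br Bas"
  proof (rule LA.intro[OF vs])
    show "LA_axioms scale br Bas"
      unfolding LA_axioms_def
      using assms(2) assms(5) fin Bas c0
      unfolding lie_algebra_def lie_CA_def abelian_set_def centralizer_def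
      by auto
  qed
  interpret LA scale br Bas by (rule la)
  show ?thesis
  proof (cases "lie_abelian br")
    case True
    then show ?thesis by simp
  next
    case False
    then obtain x1 y1 where xy: "br x1 y1 \<noteq> 0" unfolding lie_abelian_def abelian_set_def by blast
    obtain m where m: "derived scale br m = {0}" using assms(4) unfolding lie_solvable_def by blast
    from main_LA[OF xy m] show ?thesis by blast
  qed
qed

end
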